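(* Let $t$ be a positive integer, let $\overline{\mathcal{G}}_t$, $\overline{\mathcal{P}}_t$ and $\phi:\overline{\mathcal{G}}_t\to\overline{\mathcal{P}}_t$ be as described in the context, and let $\mu\in\overline{\mathcal{P}}_t$. (i) If $\ell(\mu)=m(\mu)$, then $\mu$ has exactly $2m(\mu)$ pre-images in $\overline{\mathcal{G}}_t$ under $\phi$; of these, exactly $m(\mu)$ have no overlined parts, and the other $m(\mu)$ have the first occurrence of the smallest part overlined. (ii) If $\ell(\mu)>m(\mu)$, then $\mu$ has exactly $2m(\mu)+1$ pre-images in $\overline{\mathcal{G}}_t$ under $\phi$; of these, exactly $m(\mu)+1$ have the same number of overlined parts as $\mu$, and the other $m(\mu)$ have exactly one more overlined part than $\mu$.
   Context: An overpartition is a partition (weakly decreasing sequence of positive integers) in which the first occurrence of each distinct part size may be overlined; an overlined part $\overline{a}$ has size $a$. $\ell(\lambda)$ is the number of parts of $\lambda$; for $\mu\in\overline{\mathcal{P}}_t$, $m(\mu)$ is the number of parts of $\mu$ equal to $t$. $\overline{\mathcal{G}}_t$ is the set of nonempty overpartitions whose largest and smallest parts differ by at most $t$, with the largest part not overlined whenever this difference is exactly $t$. $\overline{\mathcal{P}}_t$ is the set of nonempty overpartitions with all parts at most $t$ and no part equal to $t$ overlined. For $\pi=(\pi_1,\dots,\pi_\ell)\in\overline{\mathcal{G}}_t$, let $s=\lfloor \pi_\ell/t\rfloor$ and let $k$ be the positive integer with $\pi_k\ge (s+1)t>\pi_{k+1}$ if it exists, $k=0$ otherwise; then $\phi(\pi)$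 is the overpartition $(t,\dots,t,\ \pi_{k+1}-st,\dots,\pi_\ell-st,\ \pi_1-(s+1)t,\dots,\pi_k-(s+1)t)$ with exactly $s(\ell-k)+(s+1)k$ initial non-overlined parts equal to $t$, where each $\pi_i-st$ or $\pi_i-(s+1)t$ is overlined exactly when $\pi_i$ is, and all parts equal to $0$ are deleted. (This $\phi(\pi)$ lies in $\overline{\mathcal{P}}_t$.) *)

theory Defs
  imports Main
begin

text \<open>An overpartition is represented as a list of parts (a, b), where a is the
  size of the part and b is True iff the part is overlined.  The list is weakly
  decreasing in the sizes, all sizes are positive, and a part may be overlined
  only if it is the first occurrence of its size (in a weakly decreasing list:
  the previous part has a different size).\<close>

type_synonym ovp = "(nat \<times> bool) list"

definition is_overpartition :: "ovp \<Rightarrow> bool" where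
  "is_overpartition xs \<longleftrightarrow>
     sorted_wrt (\<lambda>p q. fst p \<ge> fst q) xs \<and>
     (\<forall>p\<in>set xs. fst p > 0) \<and>
     (\<forall>i<length xs. snd (xs ! i) \<longrightarrow> i = 0 \<or> fst (xs ! (i - 1)) \<noteq> fst (xs ! i))"

definition Gbar :: "nat \<Rightarrow> ovp set" where
  "Gbar t = {p. is_overpartition p \<and> p \<noteq> [] \<and>
      fst (hd p) - fst (last p) \<le> t \<and>
      (fst (hd p) - fst (last p) = t \<longrightarrow> \<not> snd (hd p))}"

definition Pbar :: "nat \<Rightarrow> ovp set" where
  "Pbar t = {p. is_overpartition p \<and> p \<noteq> [] \<and>
      (\<forall>q\<in>set p. fst q \<le> t \<and> (fst q = t \<longrightarrow> \<not> snd q))}"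

definition mult_t :: "nat \<Rightarrow> ovp \<Rightarrow> nat" where
  "mult_t t p = length (filter (\<lambda>q. fst q = t) p)"

definition num_ovl :: "ovp \<Rightarrow> nat" where
  "num_ovl p = length (filter snd p)"

definition smallest_first_ovl :: "ovp \<Rightarrow> bool" where
  "smallest_first_ovl p = snd (hd (dropWhile (\<lambda>q. fst q \<noteq> fst (last p)) p))"

text \<open>The map phi: s = floor(pi_l / t); the first k parts are exactly those
  with size at least (s+1)t (the list is weakly decreasing).\<close>
definition phi :: "nat \<Rightarrow> ovp \<Rightarrow> ovp" where
  "phi t p = (let s = fst (last p) div t;
                  A = takeWhile (\<lambda>q. fst q \<ge> (s + 1) * t) p;
                  B = dropWhile (\<lambda>q. fst q \<ge> (s + 1) * t) p;
                  k = length A; l = length p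
              in replicate (s * (l - k) + (s + 1) * k) (t, False) @
                 filter (\<lambda>q. fst q \<noteq> 0)
                   (map (\<lambda>(a, b). (a - s * t, b)) B @
                    map (\<lambda>(a, b). (a - (s + 1) * t, b)) A))"

end

theory Submission imports Defs begin

fun ovl_ok :: "ovp \<Rightarrow> bool" where
  "ovl_ok (x # y # zs) = ((snd y \<longrightarrow> fst x \<noteq> fst y) \<and> ovl_ok (y # zs))"
| "ovl_ok _ = True"

lemma ovl_ok_iff:
  "(\<forall>i<length xs. snd (xs ! i) \<longrightarrow> i = 0 \<or> fst (xs ! (i - 1)) \<noteq> fst (xs ! i)) \<longleftrightarrow> ovl_ok xs"
proof (induction xs rule: ovl_ok.induct)
  case (1 x y zs)
  have "(\<forall>i<length (x # y # zs). snd ((x # y # zs) ! i) \<longrightarrow> i = 0 \<or> fst ((x # y # zs) ! (i - 1)) \<noteq> fst ((x # y # zs) ! i))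
    \<longleftrightarrow> (snd y \<longrightarrow> fst x \<noteq> fst y) \<and>
        (\<forall>i<length (y # zs). snd ((y # zs) ! i) \<longrightarrow> i = 0 \<or> fst ((y # zs) ! (i - 1)) \<noteq> fst ((y # zs) ! i))"
    (is "?L \<longleftrightarrow> ?R")
  proof
    assume L: ?L
    show ?R
    proof (intro conjI allI impI)
      assume "snd y" then show "fst x \<noteq> fst y" using L[rule_format, of 1] by simp
    next
      fix i assume "i < length (y # zs)" "snd ((y # zs) ! i)"
      then show "i = 0 \<or> fst ((y # zs) ! (i - 1)) \<noteq> fst ((y # zs) ! i)"
        using L[rule_format, of "Suc i"] by (cases i) auto
    qed
  next
    assume R: ?R
    show ?L
    proof (intro allI impI)
      fix i assume "i < length (x # y # zs)" "snd ((x # y # zs) ! i)"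
      then show "i = 0 \<or> fst ((x # y # zs) ! (i - 1)) \<noteq> fst ((x # y # zs) ! i)"
        using R by (cases i; cases "i - 1") auto
    qed
  qed
  then show ?case using 1 by simp
next
  case ("2_1") then show ?case by simp
next
  case ("2_2" v) then show ?case by simp
qed

abbreviation R :: "nat \<times> bool \<Rightarrow> nat \<times> bool \<Rightarrow> bool" where
  "R \<equiv> (\<lambda>p q. fst p \<ge> fst q)"

lemma is_ovp_iff:
  "is_overpartition xs \<longleftrightarrow> sorted_wrt R xs \<and> (\<forall>p\<in>set xs. fst p > 0) \<and> ovl_ok xs"
  unfolding is_overpartition_def using ovl_ok_iff by blast

lemma ovl_ok_Cons:
  "ovl_ok (x # xs) \<longleftrightarrow> ovl_ok xs \<and> (xs \<noteq> [] \<longrightarrow> snd (hd xs) \<longrightarrow> fst x \<noteq> fst (hd xs))"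
  by (cases xs) auto

lemma ovl_ok_append:
  "ovl_ok (xs @ ys) \<longleftrightarrow> ovl_ok xs \<and> ovl_ok ys \<and>
     (xs \<noteq> [] \<longrightarrow> ys \<noteq> [] \<longrightarrow> snd (hd ys) \<longrightarrow> fst (last xs) \<noteq> fst (hd ys))"
  by (induction xs) (auto simp: ovl_ok_Cons)

lemma sorted_bounds:
  assumes "sorted_wrt R xs" "q \<in> set xs"
  shows "fst q \<le> fst (hd xs) \<and> fst (last xs) \<le> fst q"
  using assms
proof (induction xs)
  case Nil then show ?case by simp
next
  case (Cons x xs)
  then show ?case by (cases xs) auto
qed

definition rotU :: "nat \<Rightarrow> ovp \<Rightarrow> ovp" where
  "rotU t xs = (fst (last xs) + t, snd (last xs)) # butlast xs"

definition rotD :: "nat \<Rightarrow> ovp \<Rightarrow> ovp" where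
  "rotD t xs = tl xs @ [(fst (hd xs) - t, snd (hd xs))]"

definition rho0 :: "nat \<Rightarrow> nat \<Rightarrow> bool \<Rightarrow> ovp \<Rightarrow> ovp" where
  "rho0 t a b nu = (if a = 0 then nu else (t, b) # replicate (a - 1) (t, False) @ nu)"

lemma phi_split:
  assumes "B \<noteq> []" "\<forall>q\<in>set A. (fst (last B) div t + 1) * t \<le> fst q"
    "fst (hd B) < (fst (last B) div t + 1) * t"
  shows "phi t (A @ B) = replicate ((fst (last B) div t) * length B + (fst (last B) div t + 1) * length A) (t, False) @
     filter (\<lambda>q. fst q \<noteq> 0) (map (\<lambda>(a, b). (a - (fst (last B) div t) * t, b)) B @
        map (\<lambda>(a, b). (a - (fst (last B) div t + 1) * t, b)) A)"
proof -
  let ?s = "fst (last B) div t"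
  let ?P = "\<lambda>q. (?s + 1) * t \<le> fst q"
  have tw: "takeWhile ?P (A @ B) = A"
    using assms by (cases B) (auto simp: takeWhile_append2)
  have dw: "dropWhile ?P (A @ B) = B"
    using assms by (cases B) (auto simp: dropWhile_append2)
  have l: "last (A @ B) = last B" using assms(1) by simp
  show ?thesis unfolding phi_def Let_def l tw dw by (simp add: algebra_simps)
qed


lemma div_eqI': "s * t \<le> v \<Longrightarrow> v < (s + 1) * t \<Longrightarrow> v div t = (s::nat)"
  by (metis add.commute div_nat_eqI mult.commute plus_1_eq_Suc)

lemma phi_rotU:
  assumes t: "0 < t" and ne: "\<pi> \<noteq> []" and so: "sorted_wrt R \<pi>"
    and hl: "fst (hd \<pi>) \<le> fst (last \<pi>) + t"
  shows "phi t (rotU t \<pi>) = (t, False) # phi t \<pi>"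
proof -
  define y where "y = fst (last \<pi>)"
  define ob where "ob = snd (last \<pi>)"
  define s where "s = y div t"
  define P where "P = (\<lambda>q::nat\<times>bool. (s + 1) * t \<le> fst q)"
  define A where "A = takeWhile P \<pi>"
  define B where "B = dropWhile P \<pi>"
  have pAB: "\<pi> = A @ B" unfolding A_def B_def by simp
  have st: "s * t \<le> y" "y < (s + 1) * t" unfolding s_def
  proof -
    have e: "y div t * t + y mod t = y" by (rule div_mult_mod_eq)
    have "y mod t < t" using t by simp
    moreover have "(y div t + 1) * t = y div t * t + t" by (simp add: algebra_simps)
    ultimately show "y div t * t \<le> y" "y < (y div t + 1) * t" using e by linarith+
  qed
  have bnd: "\<And>q. q \<in> set \<pi> \<Longrightarrow> y \<le> fst q \<and> fst q \<le> y + t"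
    using sorted_bounds[OF so] hl unfolding y_def by fastforce
  have Bne: "B \<noteq> []"
  proof
    assume "B = []"
    then have "A = \<pi>" using pAB by simp
    then have "P (last \<pi>)" using ne set_takeWhileD unfolding A_def
      by (metis last_in_set)
    then show False using st unfolding P_def y_def by simp
  qed
  have lastB: "last B = last \<pi>" using pAB Bne by simp
  have PA: "\<forall>q\<in>set A. P q" unfolding A_def by (auto dest: set_takeWhileD)
  have hdB: "\<not> P (hd B)" unfolding B_def using Bne B_def hd_dropWhile by metis
  have soB: "sorted_wrt R B" using so pAB by (simp add: sorted_wrt_append)
  have Blt: "\<And>q. q \<in> set B \<Longrightarrow> fst q < (s + 1) * t"
    using sorted_bounds[OF soB] hdB unfolding P_def by fastforce
  have phi1: "phi t \<pi> = replicate (s * length B + (s + 1) * length A) (t, False) @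
     filter (\<lambda>q. fst q \<noteq> 0) (map (\<lambda>(a, b). (a - s * t, b)) B @
        map (\<lambda>(a, b). (a - (s + 1) * t, b)) A)"
    using phi_split[OF Bne, of A t] PA hdB lastB pAB unfolding P_def s_def y_def by simp
  have lastpi: "last \<pi> = (y, ob)" unfolding y_def ob_def by simp
  show ?thesis
  proof (cases "butlast B = []")
    case False
    define B' where "B' = butlast B"
    have B: "B = B' @ [(y, ob)]" unfolding B'_def using Bne lastB lastpi
      by (metis append_butlast_last_id)
    have rot: "rotU t \<pi> = ((y + t, ob) # A) @ B'"
      unfolding rotU_def using lastpi pAB B by (simp add: butlast_append)
    have lB': "last B' \<in> set \<pi>" using False pAB B'_def
      by (metis B Un_iff last_in_set set_append)
    have lB'B: "last B' \<in> set B" using False B by simp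
    have s': "fst (last B') div t = s"
      using bnd[OF lB'] Blt[OF lB'B] st by (intro div_eqI') auto
    have hdB': "hd B' = hd B" using False B by simp
    have phi2: "phi t (rotU t \<pi>) = replicate (s * length B' + (s + 1) * length ((y + t, ob) # A)) (t, False) @
     filter (\<lambda>q. fst q \<noteq> 0) (map (\<lambda>(a, b). (a - s * t, b)) B' @
        map (\<lambda>(a, b). (a - (s + 1) * t, b)) ((y + t, ob) # A))"
      unfolding rot using phi_split[of B' "(y + t, ob) # A" t] False PA hdB st s' hdB'
      unfolding P_def B'_def by auto
    have e: "y + t - (s + 1) * t = y - s * t" by simp
    have ar: "s * length B' + (s + 1) * length ((y + t, ob) # A) = Suc (s * length B + (s + 1) * length A)"
      using B by simp
    show ?thesis unfolding phi2 phi1 ar using B e by simp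
  next
    case True
    have B: "B = [(y, ob)]" using True Bne lastB lastpi
      by (metis append_butlast_last_id append_Nil)
    have rot: "rotU t \<pi> = [] @ ((y + t, ob) # A)"
      unfolding rotU_def using lastpi pAB B by (simp add: butlast_append)
    have lv: "(s + 1) * t \<le> fst (last ((y + t, ob) # A)) \<and> fst (last ((y + t, ob) # A)) \<le> y + t"
    proof (cases "A = []")
      case True then show ?thesis using st by simp
    next
      case False
      then have "last A \<in> set \<pi>" using pAB by simp
      then show ?thesis using False PA bnd unfolding P_def by simp
    qed
    have s': "fst (last ((y + t, ob) # A)) div t = s + 1"
      using lv st by (intro div_eqI') auto
    have phi2: "phi t (rotU t \<pi>) = replicate ((s + 1) * length ((y + t, ob) # A) + (s + 1 + 1) * length ([]::ovp)) (t, False) @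
     filter (\<lambda>q. fst q \<noteq> 0) (map (\<lambda>(a, b). (a - (s + 1) * t, b)) ((y + t, ob) # A) @
        map (\<lambda>(a, b). (a - (s + 1 + 1) * t, b)) [])"
      unfolding rot using phi_split[of "(y + t, ob) # A" "[]" t] s' st by simp
    have e: "y + t - (s + 1) * t = y - s * t" by simp
    show ?thesis unfolding phi2 phi1 using B e by (simp add: algebra_simps)
  qed
qed


lemma Gbar_props:
  assumes "\<pi> \<in> Gbar t"
  shows "\<pi> \<noteq> []" "sorted_wrt R \<pi>" "\<forall>p\<in>set \<pi>. fst p > 0" "ovl_ok \<pi>"
    "fst (hd \<pi>) \<le> fst (last \<pi>) + t"
    "fst (hd \<pi>) = fst (last \<pi>) + t \<Longrightarrow> \<not> snd (hd \<pi>)"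
  using assms unfolding Gbar_def is_ovp_iff by auto

lemma Gbar_I:
  assumes "\<pi> \<noteq> []" "sorted_wrt R \<pi>" "\<forall>p\<in>set \<pi>. fst p > 0" "ovl_ok \<pi>"
    "fst (hd \<pi>) \<le> fst (last \<pi>) + t"
    "fst (hd \<pi>) = fst (last \<pi>) + t \<Longrightarrow> \<not> snd (hd \<pi>)"
  shows "\<pi> \<in> Gbar t"
proof -
  have "fst (last \<pi>) \<le> fst (hd \<pi>)" using sorted_bounds[OF assms(2) hd_in_set[OF assms(1)]] by simp
  then show ?thesis using assms unfolding Gbar_def is_ovp_iff by auto
qed

lemma phi_rotU_G:
  assumes "0 < t" "\<pi> \<in> Gbar t"
  shows "phi t (rotU t \<pi>) = (t, False) # phi t \<pi>"
  using phi_rotU[OF assms(1)] Gbar_props[OF assms(2)] by blast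

lemma rotU_G:
  assumes t: "0 < t" and G: "\<pi> \<in> Gbar t"
  shows "rotU t \<pi> \<in> Gbar t"
proof -
  note g = Gbar_props[OF G]
  define bl where "bl = butlast \<pi>"
  define y where "y = fst (last \<pi>)"
  define ob where "ob = snd (last \<pi>)"
  have pi: "\<pi> = bl @ [(y, ob)]" unfolding bl_def y_def ob_def using g(1) by simp
  have r: "rotU t \<pi> = (y + t, ob) # bl" unfolding rotU_def bl_def y_def ob_def by simp
  have sbl: "sorted_wrt R bl" and yb: "\<forall>q\<in>set bl. y \<le> fst q"
    using g(2) sorted_wrt_append[of R bl "[(y, ob)]"] unfolding pi[symmetric] by auto
  have bnd: "\<And>q. q \<in> set \<pi> \<Longrightarrow> y \<le> fst q \<and> fst q \<le> y + t"
    using sorted_bounds[OF g(2)] g(5) unfolding y_def by fastforce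
  have okbl: "ovl_ok bl" and okj: "bl \<noteq> [] \<Longrightarrow> ob \<Longrightarrow> fst (last bl) \<noteq> y"
    using g(4) pi ovl_ok_append[of bl "[(y, ob)]"] by auto
  have hdbl: "bl \<noteq> [] \<Longrightarrow> hd bl = hd \<pi>" using pi by simp
  show ?thesis unfolding r
  proof (rule Gbar_I)
    show "sorted_wrt R ((y + t, ob) # bl)" using sbl bnd pi by auto
    show "\<forall>p\<in>set ((y + t, ob) # bl). 0 < fst p" using g(3) pi t by auto
    show "ovl_ok ((y + t, ob) # bl)" unfolding ovl_ok_Cons using okbl hdbl g(6) unfolding y_def
      by auto
    show "fst (hd ((y + t, ob) # bl)) \<le> fst (last ((y + t, ob) # bl)) + t"
      using yb by (cases "bl = []") auto
    show "\<not> snd (hd ((y + t, ob) # bl))" if "fst (hd ((y + t, ob) # bl)) = fst (last ((y + t, ob) # bl)) + t"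
    proof (cases "bl = []")
      case True then show ?thesis using that t by simp
    next
      case False then show ?thesis using that okj by fastforce
    qed
  qed simp
qed

lemma rotD_G:
  assumes t: "0 < t" and G: "\<pi> \<in> Gbar t" and h: "t < fst (hd \<pi>)"
  shows "rotD t \<pi> \<in> Gbar t \<and> rotU t (rotD t \<pi>) = \<pi>"
proof -
  note g = Gbar_props[OF G]
  obtain h0 ob xs where pi: "\<pi> = (h0, ob) # xs" using g(1) by (cases \<pi>) auto
  have r: "rotD t \<pi> = xs @ [(h0 - t, ob)]" unfolding rotD_def pi by simp
  have bnd: "\<And>q. q \<in> set \<pi> \<Longrightarrow> fst (last \<pi>) \<le> fst q \<and> fst q \<le> h0"
    using sorted_bounds[OF g(2)] pi by fastforce
  have lb: "h0 - t \<le> fst (last \<pi>)" using g(5) pi by simp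
  have sxs: "sorted_wrt R xs" using g(2) pi by simp
  have okxs: "ovl_ok xs" and okh: "xs \<noteq> [] \<Longrightarrow> snd (hd xs) \<Longrightarrow> h0 \<noteq> fst (hd xs)"
    using g(4) pi ovl_ok_Cons by auto
  have lastxs: "xs \<noteq> [] \<Longrightarrow> last \<pi> = last xs" using pi by simp
  have "rotD t \<pi> \<in> Gbar t" unfolding r
  proof (rule Gbar_I)
    have "\<forall>q\<in>set xs. h0 - t \<le> fst q" using bnd lb pi by (meson dual_order.trans list.set_intros(2))
    then show "sorted_wrt R (xs @ [(h0 - t, ob)])" using sxs by (simp add: sorted_wrt_append)
    show "\<forall>p\<in>set (xs @ [(h0 - t, ob)]). 0 < fst p" using g(3) pi h by auto
    show "ovl_ok (xs @ [(h0 - t, ob)])" unfolding ovl_ok_append using okxs lastxs g(6) pi lb h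
      by (auto simp: le_add_diff_inverse2)
    show "fst (hd (xs @ [(h0 - t, ob)])) \<le> fst (last (xs @ [(h0 - t, ob)])) + t"
      using bnd pi h by (cases xs) auto
    show "\<not> snd (hd (xs @ [(h0 - t, ob)]))" if "fst (hd (xs @ [(h0 - t, ob)])) = fst (last (xs @ [(h0 - t, ob)])) + t"
    proof (cases "xs = []")
      case True then show ?thesis using that t h by simp
    next
      case False then show ?thesis using that okh h pi by (auto simp: le_add_diff_inverse2)
    qed
  qed simp
  moreover have "rotU t (rotD t \<pi>) = \<pi>" unfolding r rotU_def using h pi by simp
  ultimately show ?thesis by simp
qed


lemma ovl_const:
  "ovl_ok (x # ys) \<Longrightarrow> \<forall>q\<in>set (x # ys). fst q = v \<Longrightarrow> ys = replicate (length ys) (v, False)"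
proof (induction ys arbitrary: x)
  case Nil then show ?case by simp
next
  case (Cons y ys)
  have "ys = replicate (length ys) (v, False)" using Cons.IH[of y] Cons.prems by simp
  moreover have "y = (v, False)" using Cons.prems by (cases y) auto
  ultimately show ?case by simp
qed

lemma rho0_form:
  assumes G: "\<pi> \<in> Gbar t" and h: "fst (hd \<pi>) \<le> t"
  shows "\<exists>a b \<nu>. \<pi> = rho0 t a b \<nu> \<and> (a = 0 \<longrightarrow> \<not> b) \<and> (\<forall>q\<in>set \<nu>. fst q < t)"
proof -
  note g = Gbar_props[OF G]
  define P where "P = (\<lambda>q::nat\<times>bool. fst q = t)"
  define T where "T = takeWhile P \<pi>"
  define D where "D = dropWhile P \<pi>"
  have pi: "\<pi> = T @ D" unfolding T_def D_def by simp
  have sD: "sorted_wrt R D" using g(2) pi by (simp add: sorted_wrt_append)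
  have Dlt: "\<forall>q\<in>set D. fst q < t"
  proof
    fix q assume q: "q \<in> set D"
    then have Dne: "D \<noteq> []" by auto
    have "\<not> P (hd D)" unfolding D_def using Dne D_def hd_dropWhile by metis
    moreover have "hd D \<in> set \<pi>" using Dne pi by simp
    then have "fst (hd D) \<le> t" using sorted_bounds[OF g(2)] h by fastforce
    ultimately have "fst (hd D) < t" unfolding P_def by simp
    then show "fst q < t" using sorted_bounds[OF sD q] by simp
  qed
  show ?thesis
  proof (cases T)
    case Nil
    then show ?thesis using pi Dlt by (intro exI[of _ 0] exI[of _ False] exI[of _ D]) (simp add: rho0_def)
  next
    case (Cons x ys)
    have PT: "\<forall>q\<in>set (x # ys). fst q = t" using Cons unfolding T_def P_def
      by (metis set_takeWhileD)
    have okT: "ovl_ok (x # ys)" using g(4) pi Cons ovl_ok_append by metis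
    have ys: "ys = replicate (length ys) (t, False)" by (rule ovl_const[OF okT PT])
    have x: "x = (t, snd x)" using PT by (cases x) auto
    have "\<pi> = rho0 t (Suc (length ys)) (snd x) D"
      unfolding rho0_def using pi Cons ys x by simp
    then show ?thesis using Dlt by blast
  qed
qed

lemma phi_rho0:
  assumes t: "0 < t" and nu: "\<forall>q\<in>set \<nu>. 0 < fst q \<and> fst q < t" and ne: "0 < a \<or> \<nu> \<noteq> []"
  shows "phi t (rho0 t a b \<nu>) = replicate a (t, False) @ \<nu>"
proof -
  define TB where "TB = (if a = 0 then [] else (t, b) # replicate (a - 1) (t, False))"
  have r: "rho0 t a b \<nu> = TB @ \<nu>" unfolding rho0_def TB_def by simp
  have TBt: "\<forall>q\<in>set TB. fst q = t" unfolding TB_def by auto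
  have lTB: "length TB = a" unfolding TB_def by simp
  have z: "filter (\<lambda>q. fst q \<noteq> 0) (map (\<lambda>(a, b). (a - c * t, b)) TB) = []" if "1 \<le> c" for c
  proof -
    have "c * t \<ge> t" using that by simp
    then show ?thesis using TBt by (auto simp: filter_empty_conv)
  qed
  show ?thesis
  proof (cases "\<nu> = []")
    case False
    have s: "fst (last \<nu>) div t = 0" using nu False by simp
    have h: "fst (hd \<nu>) < t" using nu False by simp
    have m: "map (\<lambda>(a, b). (a - 0 * t, b)) \<nu> = \<nu>" by (induction \<nu>) auto
    have f: "filter (\<lambda>q. fst q \<noteq> 0) \<nu> = \<nu>" using nu by (auto simp: filter_id_conv)
    show ?thesis unfolding r using phi_split[OF False, of TB t] s h TBt lTB m f z[of 1] by simp
  next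
    case True
    then have a: "0 < a" using ne by simp
    then have TBne: "TB \<noteq> []" unfolding TB_def by simp
    have lst: "fst (last TB) = t" "fst (hd TB) = t" using TBt TBne by auto
    have s: "fst (last TB) div t = 1" using lst t by simp
    have "phi t ([] @ TB) = replicate a (t, False)"
      using phi_split[OF TBne, of "[]" t] s lst lTB z[of 1] t by simp
    then show ?thesis using r True by simp
  qed
qed


lemma rep_eq:
  "(\<forall>q\<in>set xs. q \<noteq> x) \<Longrightarrow> (\<forall>q\<in>set ys. q \<noteq> x) \<Longrightarrow> replicate a x @ xs = replicate c x @ ys
   \<Longrightarrow> a = c \<and> xs = ys"
proof (induction a arbitrary: c)
  case 0 then show ?case by (cases c) auto
next
  case (Suc a)
  show ?case
  proof (cases c)
    case 0
    then have "ys = x # (replicate a x @ xs)" using Suc.prems(3) by simp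
    then show ?thesis using Suc.prems(2) by simp
  next
    case (Suc c')
    then have "replicate a x @ xs = replicate c' x @ ys" using Suc.prems(3) by simp
    then show ?thesis using Suc.IH[OF Suc.prems(1,2)] Suc by simp
  qed
qed

lemma base_char:
  assumes t: "0 < t" and nu: "\<forall>q\<in>set \<nu>. fst q < t" and G: "\<pi> \<in> Gbar t"
    and h: "fst (hd \<pi>) \<le> t" and ph: "phi t \<pi> = replicate m (t, False) @ \<nu>"
  shows "\<exists>b. (m = 0 \<longrightarrow> \<not> b) \<and> \<pi> = rho0 t m b \<nu>"
proof -
  obtain a b \<nu>' where pi: "\<pi> = rho0 t a b \<nu>'" and ab: "a = 0 \<longrightarrow> \<not> b" and nu': "\<forall>q\<in>set \<nu>'. fst q < t"
    using rho0_form[OF G h] by blast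
  note g = Gbar_props[OF G]
  have pos: "\<forall>q\<in>set \<nu>'. 0 < fst q \<and> fst q < t" using nu' g(3) pi
    by (cases "a = 0") (auto simp: rho0_def)
  have ne: "0 < a \<or> \<nu>' \<noteq> []" using g(1) pi unfolding rho0_def by (cases "a = 0") simp_all
  have "replicate a (t, False) @ \<nu>' = replicate m (t, False) @ \<nu>"
    using phi_rho0[OF t pos ne, of b] pi ph by simp
  moreover have "\<forall>q\<in>set \<nu>'. q \<noteq> (t, False)" "\<forall>q\<in>set \<nu>. q \<noteq> (t, False)" using nu nu' by auto
  ultimately have "a = m \<and> \<nu>' = \<nu>" using rep_eq[of \<nu>' "(t, False)" \<nu> a m] by blast
  then show ?thesis using pi ab by blast
qed

lemma pre_char:
  assumes t: "0 < t" and nu: "\<forall>q\<in>set \<nu>. fst q < t"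
  shows "\<pi> \<in> Gbar t \<Longrightarrow> phi t \<pi> = replicate m (t, False) @ \<nu> \<Longrightarrow>
    \<exists>a b. a \<le> m \<and> (a = 0 \<longrightarrow> \<not> b) \<and> rho0 t a b \<nu> \<noteq> [] \<and> \<pi> = (rotU t ^^ (m - a)) (rho0 t a b \<nu>)"
proof (induction m arbitrary: \<pi>)
  case 0
  show ?case
  proof (cases "fst (hd \<pi>) \<le> t")
    case True
    then obtain b where "\<pi> = rho0 t 0 b \<nu>" using base_char[OF t nu 0(1) True 0(2)] by blast
    then show ?thesis using Gbar_props(1)[OF 0(1)] by (intro exI[of _ 0] exI[of _ False]) (auto simp: rho0_def)
  next
    case False
    then have "phi t \<pi> = (t, False) # phi t (rotD t \<pi>)"
      using rotD_G[OF t 0(1)] phi_rotU_G[OF t] by (metis not_le)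
    then have "(t, False) \<in> set \<nu>" using 0(2) by (metis list.set_intros(1) append_Nil replicate_0)
    then show ?thesis using nu by fastforce
  qed
next
  case (Suc m)
  show ?case
  proof (cases "fst (hd \<pi>) \<le> t")
    case True
    then obtain b where b: "Suc m = 0 \<longrightarrow> \<not> b" "\<pi> = rho0 t (Suc m) b \<nu>" using base_char[OF t nu Suc(2) True Suc(3)] by blast
    then show ?thesis using Gbar_props(1)[OF Suc(2)] by (intro exI[of _ "Suc m"] exI[of _ b]) auto
  next
    case False
    have rd: "rotD t \<pi> \<in> Gbar t" "rotU t (rotD t \<pi>) = \<pi>" using rotD_G[OF t Suc(2)] False by auto
    have "phi t \<pi> = (t, False) # phi t (rotD t \<pi>)"
      using rd phi_rotU_G[OF t] by metis
    then have "phi t (rotD t \<pi>) = replicate m (t, False) @ \<nu>" using Suc(3) by simp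
    then obtain a b where ab: "a \<le> m" "a = 0 \<longrightarrow> \<not> b" "rho0 t a b \<nu> \<noteq> []"
      "rotD t \<pi> = (rotU t ^^ (m - a)) (rho0 t a b \<nu>)" using Suc.IH[OF rd(1)] by blast
    have "\<pi> = (rotU t ^^ (Suc m - a)) (rho0 t a b \<nu>)"
      using rd(2) ab(1,4) by (simp add: Suc_diff_le)
    then show ?thesis using ab by (intro exI[of _ a] exI[of _ b]) auto
  qed
qed


lemma ovl_ok_rep: "ovl_ok ((v, b) # replicate n (v, False))"
  by (induction n arbitrary: b) (auto simp: ovl_ok_Cons)

lemma rho0_G:
  assumes t: "0 < t" and nu: "\<forall>q\<in>set \<nu>. 0 < fst q \<and> fst q < t" and so: "sorted_wrt R \<nu>"
    and ok: "ovl_ok \<nu>" and ne: "0 < a \<or> \<nu> \<noteq> []"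
  shows "rho0 t a b \<nu> \<in> Gbar t"
proof (cases "a = 0")
  case True
  then have r: "rho0 t a b \<nu> = \<nu>" and nne: "\<nu> \<noteq> []" using ne by (auto simp: rho0_def)
  show ?thesis unfolding r
  proof (rule Gbar_I)
    show "fst (hd \<nu>) \<le> fst (last \<nu>) + t" using nu hd_in_set[OF nne] by fastforce
    show "\<not> snd (hd \<nu>)" if "fst (hd \<nu>) = fst (last \<nu>) + t"
      using that nu hd_in_set[OF nne] by fastforce
  qed (use nne so nu ok in auto)
next
  case False
  define TB where "TB = (t, b) # replicate (a - 1) (t, False)"
  have r: "rho0 t a b \<nu> = TB @ \<nu>" unfolding rho0_def TB_def using False by simp
  have TBt: "\<forall>q\<in>set TB. fst q = t" unfolding TB_def by auto
  have "sorted_wrt R (replicate n (t, False))" for n by (induction n) auto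
  then have sTB: "sorted_wrt R TB" unfolding TB_def by auto
  have okTB: "ovl_ok TB" unfolding TB_def by (rule ovl_ok_rep)
  have lastTB: "fst (last TB) = t" using TBt unfolding TB_def by (metis last_in_set list.distinct(1))
  show ?thesis unfolding r
  proof (rule Gbar_I)
    show "sorted_wrt R (TB @ \<nu>)" using sTB so TBt nu by (auto simp: sorted_wrt_append less_imp_le)
    show "\<forall>p\<in>set (TB @ \<nu>). 0 < fst p" using TBt nu t by auto
    show "ovl_ok (TB @ \<nu>)" unfolding ovl_ok_append using okTB ok lastTB nu by fastforce
    show "fst (hd (TB @ \<nu>)) \<le> fst (last (TB @ \<nu>)) + t" using lastTB TBt unfolding TB_def by simp
    show "\<not> snd (hd (TB @ \<nu>))" if "fst (hd (TB @ \<nu>)) = fst (last (TB @ \<nu>)) + t"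
    proof (cases "\<nu> = []")
      case True then show ?thesis using that lastTB t unfolding TB_def by simp
    next
      case False
      then have "0 < fst (last \<nu>)" using nu by simp
      then show ?thesis using that False unfolding TB_def by simp
    qed
  qed (simp add: TB_def)
qed

lemma rotU_ne: "rotU t xs \<noteq> []" unfolding rotU_def by simp

lemma pow_G: "0 < t \<Longrightarrow> \<rho> \<in> Gbar t \<Longrightarrow> (rotU t ^^ n) \<rho> \<in> Gbar t"
  by (induction n) (auto intro: rotU_G)

lemma phi_pow: "0 < t \<Longrightarrow> \<rho> \<in> Gbar t \<Longrightarrow> phi t ((rotU t ^^ n) \<rho>) = replicate n (t, False) @ phi t \<rho>"
  by (induction n) (auto simp: phi_rotU_G pow_G)

lemma num_ovl_rotU: "xs \<noteq> [] \<Longrightarrow> num_ovl (rotU t xs) = num_ovl xs"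
proof -
  assume "xs \<noteq> []"
  then have "xs = butlast xs @ [last xs]" by simp
  then have "num_ovl xs = length (filter snd (butlast xs @ [last xs]))"
    unfolding num_ovl_def by simp
  then have "num_ovl xs = num_ovl (butlast xs) + (if snd (last xs) then 1 else 0)"
    unfolding num_ovl_def by simp
  then show ?thesis unfolding rotU_def num_ovl_def by simp
qed

lemma num_ovl_pow: "xs \<noteq> [] \<Longrightarrow> num_ovl ((rotU t ^^ n) xs) = num_ovl xs"
proof (induction n)
  case 0 then show ?case by simp
next
  case (Suc n)
  have "(rotU t ^^ n) xs \<noteq> []" using Suc.prems rotU_ne by (cases n) auto
  then show ?case using Suc num_ovl_rotU by simp
qed

lemma num_ovl_rho0: "num_ovl (rho0 t a b \<nu>) = (if 0 < a \<and> b then 1 else 0) + num_ovl \<nu>"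
  unfolding rho0_def num_ovl_def by simp


lemma rotU_inj: "xs \<noteq> [] \<Longrightarrow> ys \<noteq> [] \<Longrightarrow> rotU t xs = rotU t ys \<Longrightarrow> xs = ys"
proof -
  assume a: "xs \<noteq> []" "ys \<noteq> []" "rotU t xs = rotU t ys"
  then have "butlast xs = butlast ys" "fst (last xs) = fst (last ys)" "snd (last xs) = snd (last ys)"
    unfolding rotU_def by simp_all
  then have "butlast xs = butlast ys" "last xs = last ys" by (simp_all add: prod_eq_iff)
  then show "xs = ys" using a(1,2) by (metis append_butlast_last_id)
qed

lemma pow_ne: "xs \<noteq> [] \<Longrightarrow> (rotU t ^^ n) xs \<noteq> []"
  by (cases n) (auto simp: rotU_ne)

lemma pow_inj: "xs \<noteq> [] \<Longrightarrow> ys \<noteq> [] \<Longrightarrow> (rotU t ^^ n) xs = (rotU t ^^ n) ys \<Longrightarrow> xs = ys"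
proof (induction n)
  case 0 then show ?case by simp
next
  case (Suc n)
  have "(rotU t ^^ n) xs \<noteq> []" "(rotU t ^^ n) ys \<noteq> []" using Suc.prems(1,2) by (simp_all add: pow_ne)
  moreover have "rotU t ((rotU t ^^ n) xs) = rotU t ((rotU t ^^ n) ys)" using Suc.prems(3) by simp
  ultimately show ?case using Suc.IH Suc.prems(1,2) rotU_inj by blast
qed

lemma rho0_hd: "0 < a \<Longrightarrow> hd (rho0 t a b \<nu>) = (t, b)" unfolding rho0_def by simp

lemma inj_aux:
  assumes t: "0 < t" and le: "a \<le> a'" "a' \<le> m"
    and G1: "rho0 t a b \<nu> \<in> Gbar t" and G2: "rho0 t a' b' \<nu> \<in> Gbar t"
    and eq: "(rotU t ^^ (m - a)) (rho0 t a b \<nu>) = (rotU t ^^ (m - a')) (rho0 t a' b' \<nu>)"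
  shows "a = a'"
proof (rule ccontr)
  assume ne: "a \<noteq> a'"
  have "m - a = (m - a') + (a' - a)" using le by simp
  then have "(rotU t ^^ (m - a')) ((rotU t ^^ (a' - a)) (rho0 t a b \<nu>)) = (rotU t ^^ (m - a')) (rho0 t a' b' \<nu>)"
    using eq by (simp add: funpow_add)
  then have e2: "(rotU t ^^ (a' - a)) (rho0 t a b \<nu>) = rho0 t a' b' \<nu>"
    by (rule pow_inj[OF pow_ne[OF Gbar_props(1)[OF G1]] Gbar_props(1)[OF G2]])
  obtain d where d: "a' - a = Suc d" using ne le by (cases "a' - a") auto
  define X where "X = (rotU t ^^ d) (rho0 t a b \<nu>)"
  have XG: "X \<in> Gbar t" unfolding X_def using pow_G[OF t G1] .
  have "rotU t X = rho0 t a' b' \<nu>" using e2 d unfolding X_def by simp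
  moreover have "0 < a'" using ne le by simp
  ultimately have "hd (rotU t X) = (t, b')" using rho0_hd by metis
  then have "fst (last X) + t = t" unfolding rotU_def by simp
  moreover have "0 < fst (last X)" using Gbar_props(1,3)[OF XG] by simp
  ultimately show False by simp
qed

definition FF :: "nat \<Rightarrow> nat \<Rightarrow> nat \<Rightarrow> bool \<Rightarrow> nat \<Rightarrow> ovp" where
  "FF t i v b j = replicate i (v + t, False) @ (v, b) # replicate j (v, False)"

lemma rotU_FF: "rotU t (FF t i v b j) = (if 0 < j then FF t (Suc i) v b (j - 1) else FF t 0 (v + t) b i)"
proof (cases j)
  case 0 then show ?thesis unfolding FF_def rotU_def by (simp add: butlast_append)
next
  case (Suc j')
  have "0 < n \<longrightarrow> (x::nat\<times>bool) # butlast (replicate n x) = replicate n x" for n x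
    by (induction n) auto
  then show ?thesis unfolding FF_def rotU_def Suc by (simp add: butlast_append)
qed

lemma pow_FF: "0 < v \<Longrightarrow> \<exists>i' v' j'. 0 < v' \<and> (rotU t ^^ n) (FF t i v b j) = FF t i' v' b j'"
proof (induction n)
  case 0 then show ?case by auto
next
  case (Suc n)
  obtain i' v' j' where v': "0 < v'" and e0: "(rotU t ^^ n) (FF t i v b j) = FF t i' v' b j'"
    using Suc by blast
  have e: "(rotU t ^^ Suc n) (FF t i v b j) = rotU t (FF t i' v' b j')" using e0 by simp
  show ?case
  proof (cases "0 < j'")
    case True
    then have "(rotU t ^^ Suc n) (FF t i v b j) = FF t (Suc i') v' b (j' - 1)"
      using e rotU_FF[of t i' v' b j'] by simp
    then show ?thesis using v' by blast
  next
    case False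
    then have "(rotU t ^^ Suc n) (FF t i v b j) = FF t 0 (v' + t) b i'"
      using e rotU_FF[of t i' v' b j'] by simp
    then show ?thesis using v' by blast
  qed
qed

lemma sfo_FF: "0 < t \<Longrightarrow> smallest_first_ovl (FF t i v b j) = b"
proof -
  assume t: "0 < t"
  have l: "fst (last (FF t i v b j)) = v" unfolding FF_def by (cases j) auto
  have "dropWhile (\<lambda>q. fst q \<noteq> v) (FF t i v b j) = (v, b) # replicate j (v, False)"
    unfolding FF_def using t by (induction i) auto
  then show ?thesis unfolding smallest_first_ovl_def l by simp
qed

lemma rho0_FF: "0 < a \<Longrightarrow> rho0 t a b [] = FF t 0 t b (a - 1)"
  unfolding rho0_def FF_def by simp


lemma mu_decomp:
  assumes t: "0 < t" and P: "\<mu> \<in> Pbar t"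
    and \<nu>_def: "\<nu> = dropWhile (\<lambda>q. fst q = t) \<mu>"
  shows "\<mu> = replicate (mult_t t \<mu>) (t, False) @ \<nu>" "\<forall>q\<in>set \<nu>. 0 < fst q \<and> fst q < t"
    "sorted_wrt R \<nu>" "ovl_ok \<nu>" "length \<mu> = mult_t t \<mu> + length \<nu>" "num_ovl \<mu> = num_ovl \<nu>"
proof -
  define T where "T = takeWhile (\<lambda>q. fst q = t) \<mu>"
  have mu: "\<mu> = T @ \<nu>" unfolding T_def \<nu>_def by simp
  have p: "is_overpartition \<mu>" "\<forall>q\<in>set \<mu>. fst q \<le> t \<and> (fst q = t \<longrightarrow> \<not> snd q)"
    using P unfolding Pbar_def by auto
  have so: "sorted_wrt R \<mu>" "\<forall>q\<in>set \<mu>. 0 < fst q" "ovl_ok \<mu>" using p(1) is_ovp_iff by auto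
  have Tc: "\<forall>q\<in>set T. q = (t, False)"
  proof
    fix q assume "q \<in> set T"
    then have "fst q = t" "q \<in> set \<mu>" unfolding T_def by (auto dest: set_takeWhileD)
    then show "q = (t, False)" using p(2) by (cases q) auto
  qed
  then have T: "T = replicate (length T) (t, False)" by (simp add: replicate_length_same)
  show sonu: "sorted_wrt R \<nu>" using so(1) mu by (simp add: sorted_wrt_append)
  show nu: "\<forall>q\<in>set \<nu>. 0 < fst q \<and> fst q < t"
  proof
    fix q assume q: "q \<in> set \<nu>"
    then have ne: "\<nu> \<noteq> []" by auto
    have "dropWhile (\<lambda>q. fst q = t) \<mu> \<noteq> []" using ne \<nu>_def by simp
    from hd_dropWhile[OF this] have "fst (hd \<nu>) \<noteq> t" using \<nu>_def by simp
    moreover have "hd \<nu> \<in> set \<mu>" using ne mu by simp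
    ultimately have "fst (hd \<nu>) < t" using p(2) by fastforce
    moreover have "q \<in> set \<mu>" using q mu by simp
    ultimately show "0 < fst q \<and> fst q < t" using sorted_bounds[OF sonu q] so(2) by fastforce
  qed
  show "ovl_ok \<nu>" using so(3) unfolding mu ovl_ok_append by simp
  have "filter (\<lambda>q. fst q = t) \<nu> = []" using nu by (auto simp: filter_empty_conv)
  moreover have "filter (\<lambda>q. fst q = t) T = T" using Tc by (auto simp: filter_id_conv)
  ultimately have m: "mult_t t \<mu> = length T" unfolding mult_t_def using mu by simp
  show "\<mu> = replicate (mult_t t \<mu>) (t, False) @ \<nu>" using mu T m by simp
  show "length \<mu> = mult_t t \<mu> + length \<nu>" using mu m by simp
  have "filter snd T = []" using Tc by (auto simp: filter_empty_conv)
  then show "num_ovl \<mu> = num_ovl \<nu>" unfolding num_ovl_def using mu by simp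
qed


theorem mainTheorem5:
  fixes t :: nat and mu :: ovp
  assumes "0 < t" and "mu \<in> Pbar t"
  shows "(length mu = mult_t t mu \<longrightarrow>
            card {p \<in> Gbar t. phi t p = mu} = 2 * mult_t t mu \<and>
            card {p \<in> Gbar t. phi t p = mu \<and> num_ovl p = 0} = mult_t t mu \<and>
            card {p \<in> Gbar t. phi t p = mu \<and> smallest_first_ovl p} = mult_t t mu)
       \<and> (length mu > mult_t t mu \<longrightarrow>
            card {p \<in> Gbar t. phi t p = mu} = 2 * mult_t t mu + 1 \<and>
            card {p \<in> Gbar t. phi t p = mu \<and> num_ovl p = num_ovl mu} = mult_t t mu + 1 \<and>
            card {p \<in> Gbar t. phi t p = mu \<and> num_ovl p = num_ovl mu + 1} = mult_t t mu)"
proof -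
  note t = assms(1)
  define m where "m = mult_t t mu"
  define \<nu> where "\<nu> = dropWhile (\<lambda>q. fst q = t) mu"
  note d = mu_decomp[OF assms \<nu>_def, folded m_def]
  have nul: "\<forall>q\<in>set \<nu>. fst q < t" using d(2) by auto
  define I where "I = {(a, b). a \<le> m \<and> (a = 0 \<longrightarrow> \<not> b \<and> \<nu> \<noteq> [])}"
  define f where "f = (\<lambda>(a, b). (rotU t ^^ (m - a)) (rho0 t a b \<nu>))"
  have rG: "rho0 t a b \<nu> \<in> Gbar t" if "(a, b) \<in> I" for a b
  proof (rule rho0_G[OF t d(2) d(3) d(4)])
    show "0 < a \<or> \<nu> \<noteq> []" using that unfolding I_def by auto
  qed
  have S: "{p \<in> Gbar t. phi t p = mu} = f ` I"
  proof
    show "{p \<in> Gbar t. phi t p = mu} \<subseteq> f ` I"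
    proof
      fix p assume "p \<in> {p \<in> Gbar t. phi t p = mu}"
      then have p: "p \<in> Gbar t" "phi t p = replicate m (t, False) @ \<nu>" using d(1) by auto
      obtain a b where ab: "a \<le> m" "a = 0 \<longrightarrow> \<not> b" "rho0 t a b \<nu> \<noteq> []"
        "p = (rotU t ^^ (m - a)) (rho0 t a b \<nu>)" using pre_char[OF t nul p] by blast
      have "(a, b) \<in> I" using ab unfolding I_def rho0_def by auto
      moreover have "p = f (a, b)" unfolding f_def using ab by simp
      ultimately show "p \<in> f ` I" by blast
    qed
  next
    show "f ` I \<subseteq> {p \<in> Gbar t. phi t p = mu}"
    proof
      fix p assume "p \<in> f ` I"
      then obtain a b where ab: "(a, b) \<in> I" "p = f (a, b)" by auto
      have G: "rho0 t a b \<nu> \<in> Gbar t" using rG[OF ab(1)] .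
      have ne: "0 < a \<or> \<nu> \<noteq> []" using ab(1) unfolding I_def by auto
      have am: "a \<le> m" using ab(1) unfolding I_def by auto
      have "phi t p = replicate (m - a) (t, False) @ replicate a (t, False) @ \<nu>"
        unfolding ab(2) f_def using phi_pow[OF t G] phi_rho0[OF t d(2) ne] by simp
      also have "\<dots> = replicate m (t, False) @ \<nu>"
        using am by (simp add: replicate_add[symmetric])
      finally show "p \<in> {p \<in> Gbar t. phi t p = mu}"
        using pow_G[OF t G] ab(2) d(1) unfolding f_def by simp
    qed
  qed
  have inj: "inj_on f I"
  proof (rule inj_onI)
    fix x y assume x: "x \<in> I" and y: "y \<in> I" and e: "f x = f y"
    obtain a b where xa: "x = (a, b)" by (cases x)
    obtain a' b' where ya: "y = (a', b')" by (cases y)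
    have G1: "rho0 t a b \<nu> \<in> Gbar t" using rG x xa by simp
    have G2: "rho0 t a' b' \<nu> \<in> Gbar t" using rG y ya by simp
    have am: "a \<le> m" "a' \<le> m" using x y xa ya unfolding I_def by auto
    have e': "(rotU t ^^ (m - a)) (rho0 t a b \<nu>) = (rotU t ^^ (m - a')) (rho0 t a' b' \<nu>)"
      using e xa ya unfolding f_def by simp
    have aa: "a = a'"
    proof (cases "a \<le> a'")
      case True then show ?thesis using inj_aux[OF t True am(2) G1 G2 e'] by simp
    next
      case False then show ?thesis using inj_aux[OF t _ am(1) G2 G1 e'[symmetric]] by simp
    qed
    then have "rho0 t a b \<nu> = rho0 t a' b' \<nu>"
      using pow_inj[OF Gbar_props(1)[OF G1] Gbar_props(1)[OF G2]] e' by simp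
    then have "b = b'"
    proof (cases "a = 0")
      case True
      have "(a, b) \<in> I" "(a', b') \<in> I" using x y xa ya by simp_all
      then have "\<not> b" "\<not> b'" using True aa unfolding I_def by simp_all
      then show ?thesis by simp
    next
      case False
      have h: "hd (rho0 t a b \<nu>) = hd (rho0 t a' b' \<nu>)"
        using \<open>rho0 t a b \<nu> = rho0 t a' b' \<nu>\<close> by (rule arg_cong)
      have "0 < a" "0 < a'" using False aa by auto
      then have "(t, b) = (t, b')" using h rho0_hd[of a t b \<nu>] rho0_hd[of a' t b' \<nu>] by simp
      then show ?thesis by simp
    qed
    then show "x = y" unfolding xa ya aa by simp
  qed
  have cardQ: "card {p \<in> Gbar t. phi t p = mu \<and> Q p} = card {x \<in> I. Q (f x)}" for Q
  proof -
    have "{p \<in> Gbar t. phi t p = mu \<and> Q p} = {p \<in> {p \<in> Gbar t. phi t p = mu}. Q p}" by auto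
    also have "\<dots> = {p \<in> f ` I. Q p}" by (simp only: S)
    also have "\<dots> = f ` {x \<in> I. Q (f x)}" by auto
    finally have "{p \<in> Gbar t. phi t p = mu \<and> Q p} = f ` {x \<in> I. Q (f x)}" .
    moreover have "inj_on f {x \<in> I. Q (f x)}" using inj by (rule inj_on_subset) auto
    ultimately show ?thesis by (simp add: card_image)
  qed
  have card0: "card {p \<in> Gbar t. phi t p = mu} = card I"
    using cardQ[of "\<lambda>_. True"] by simp
  have nov: "num_ovl (f x) = (if snd x then 1 else 0) + num_ovl \<nu>" if "x \<in> I" for x
  proof -
    obtain a b where xa: "x = (a, b)" by (cases x)
    have "rho0 t a b \<nu> \<noteq> []" using Gbar_props(1)[OF rG] that xa by simp
    then have "num_ovl (f x) = num_ovl (rho0 t a b \<nu>)" unfolding f_def xa by (simp add: num_ovl_pow)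
    moreover have "(a, b) \<in> I" using that xa by simp
    then have "a = 0 \<longrightarrow> \<not> b" unfolding I_def by simp
    ultimately show ?thesis using xa num_ovl_rho0[of t a b \<nu>] by auto
  qed
  define F0 where "F0 = (\<lambda>X::nat set. (\<lambda>a. (a, False)) ` X)"
  define F1 where "F1 = (\<lambda>X::nat set. (\<lambda>a. (a, True)) ` X)"
  have cF0: "card (F0 X) = card X" for X unfolding F0_def by (rule card_image) (auto intro: inj_onI)
  have cF1: "card (F1 X) = card X" for X unfolding F1_def by (rule card_image) (auto intro: inj_onI)
  have I1: "{x \<in> I. snd x} = F1 {1..m}" unfolding I_def F1_def by auto
  have disj: "F0 X \<inter> F1 Y = {}" for X Y unfolding F0_def F1_def by auto
  have fin: "finite (F0 X)" "finite (F1 X)" if "finite X" for X using that unfolding F0_def F1_def by auto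
  show ?thesis
  proof (intro conjI impI)
    assume L: "length mu = mult_t t mu"
    then have nu0: "\<nu> = []" using d(5) m_def by simp
    have I0: "{x \<in> I. \<not> snd x} = F0 {1..m}" unfolding I_def F0_def using nu0 by auto
    have Ieq: "I = F0 {1..m} \<union> F1 {1..m}" using I0 I1 by blast
    show "card {p \<in> Gbar t. phi t p = mu} = 2 * mult_t t mu"
      unfolding card0 Ieq m_def[symmetric] using card_Un_disjoint[OF fin(1) fin(2) disj, of "{1..m}" "{1..m}"] cF0 cF1 by simp
    have n0: "num_ovl \<nu> = 0" using nu0 by (simp add: num_ovl_def)
    have "{x \<in> I. num_ovl (f x) = 0} = {x \<in> I. \<not> snd x}" using nov n0 by auto
    then show "card {p \<in> Gbar t. phi t p = mu \<and> num_ovl p = 0} = mult_t t mu"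
      unfolding cardQ I0 by (simp add: cF0 m_def)
    have "smallest_first_ovl (f x) = snd x" if "x \<in> I" for x
    proof -
      obtain a b where xa: "x = (a, b)" by (cases x)
      have a: "0 < a" using that xa nu0 unfolding I_def by auto
      obtain i' v' j' where "(rotU t ^^ (m - a)) (FF t 0 t b (a - 1)) = FF t i' v' b j'"
        using pow_FF[OF t] by blast
      then show ?thesis unfolding f_def xa using rho0_FF[OF a] nu0 sfo_FF[OF t] by simp
    qed
    then have "{x \<in> I. smallest_first_ovl (f x)} = {x \<in> I. snd x}" by auto
    then show "card {p \<in> Gbar t. phi t p = mu \<and> smallest_first_ovl p} = mult_t t mu"
      unfolding cardQ I1 by (simp add: cF1 m_def)
  next
    assume L: "mult_t t mu < length mu"
    then have nu0: "\<nu> \<noteq> []" using d(5) m_def by auto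
    have I0: "{x \<in> I. \<not> snd x} = F0 {..m}" unfolding I_def F0_def using nu0 by auto
    have Ieq: "I = F0 {..m} \<union> F1 {1..m}" using I0 I1 by blast
    show "card {p \<in> Gbar t. phi t p = mu} = 2 * mult_t t mu + 1"
      unfolding card0 Ieq m_def[symmetric] using card_Un_disjoint[OF fin(1) fin(2) disj, of "{..m}" "{1..m}"] cF0 cF1 by simp
    have "{x \<in> I. num_ovl (f x) = num_ovl mu} = {x \<in> I. \<not> snd x}" using nov d(6) by auto
    then show "card {p \<in> Gbar t. phi t p = mu \<and> num_ovl p = num_ovl mu} = mult_t t mu + 1"
      unfolding cardQ I0 by (simp add: cF0 m_def)
    have "{x \<in> I. num_ovl (f x) = num_ovl mu + 1} = {x \<in> I. snd x}" using nov d(6) by (auto split: if_splits)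
    then show "card {p \<in> Gbar t. phi t p = mu \<and> num_ovl p = num_ovl mu + 1} = mult_t t mu"
      unfolding cardQ I1 by (simp add: cF1 m_def)
  qed
qed

end
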